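(* For every $n\ge 3$, the graph $C_n\times K_2$ is a cubic admissible graph.
   Context: $C_n\times K_2$ is the cartesian product of the cycle of order $n$ with $K_2$ (the prism on $2n$ vertices). A trail is a walk with no repeated edge; its length is its number of edges, and it spans a graph if it contains every vertex. $t(L)$ denotes the length of a longest trail in $L$. A (multi)graph $L$ is admissible if (A-1) $t(L)<|E(L)|$, and (A-2) for each vertex $v\in V(L)$ and each edge $e$ incident with $v$, there is a trail of length $t(L)$ beginning $v,e,\ldots$ which spans $L$. *)

theory Defs
  imports Main
begin

text \<open>Graphs are given by a vertex set V and a set E of edges, each edge being a
  2-element set of vertices (simple graphs suffice: the prism is simple).\<close>

definition walk_edges :: "'v list \<Rightarrow> 'v set list" where
  "walk_edges vs = map (\<lambda>(a, b). {a, b}) (zip vs (tl vs))"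

definition is_trail :: "'v set \<Rightarrow> 'v set set \<Rightarrow> 'v list \<Rightarrow> bool" where
  "is_trail V E vs \<longleftrightarrow> vs \<noteq> [] \<and> set vs \<subseteq> V \<and> set (walk_edges vs) \<subseteq> E
      \<and> distinct (walk_edges vs)"

definition trail_length :: "'v list \<Rightarrow> nat" where
  "trail_length vs = length vs - 1"

definition longest_trail :: "'v set \<Rightarrow> 'v set set \<Rightarrow> nat" where
  "longest_trail V E = Max {trail_length vs | vs. is_trail V E vs}"

definition admissible :: "'v set \<Rightarrow> 'v set set \<Rightarrow> bool" where
  "admissible V E \<longleftrightarrow>
     longest_trail V E < card E \<and>
     (\<forall>v\<in>V. \<forall>e\<in>E. v \<in> e \<longrightarrow>
        (\<exists>vs. is_trail V E vs \<and> trail_length vs = longest_trail V E \<and>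
              length vs \<ge> 2 \<and> hd vs = v \<and> hd (walk_edges vs) = e \<and> set vs = V))"

definition cubic :: "'v set \<Rightarrow> 'v set set \<Rightarrow> bool" where
  "cubic V E \<longleftrightarrow> (\<forall>v\<in>V. card {e \<in> E. v \<in> e} = 3)"

definition prism_verts :: "nat \<Rightarrow> (nat \<times> bool) set" where
  "prism_verts n = {0..<n} \<times> UNIV"

definition prism_edges :: "nat \<Rightarrow> (nat \<times> bool) set set" where
  "prism_edges n =
     {{(i, b), (Suc i mod n, b)} | i b. i < n} \<union> {{(i, False), (i, True)} | i. i < n}"

end

theory Submission
  imports Defs
begin

lemma we_len: "length (walk_edges vs) = length vs - 1"
  by (simp add: walk_edges_def)

lemma we_nth: "j < length vs - 1 \<Longrightarrow> walk_edges vs ! j = {vs!j, vs!Suc j}"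
  by (simp add: walk_edges_def nth_tl)

lemma trail_bound:
  assumes fin: "finite V" "finite E" and noloop: "\<And>v. {v} \<notin> E"
    and deg: "\<And>v. v \<in> V \<Longrightarrow> card {e\<in>E. v \<in> e} \<le> 3"
    and tr: "is_trail V E vs"
  shows "trail_length vs \<le> card V + 1"
proof (cases "length vs < 2")
  case True thus ?thesis by (simp add: trail_length_def)
next
  case False
  define L where "L = length vs"
  define W where "W = walk_edges vs"
  have WL: "length W = L - 1" by (simp add: W_def L_def we_len)
  have Wn: "\<And>j. j < L - 1 \<Longrightarrow> W ! j = {vs!j, vs!Suc j}" by (simp add: W_def L_def we_nth)
  have Wd: "distinct W" and WE: "set W \<subseteq> E" and VS: "set vs \<subseteq> V"
    using tr by (auto simp: is_trail_def W_def)
  define w where "w = take (L-2) (tl vs)"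
  have wl: "length w = L - 2" using False by (simp add: w_def L_def)
  have wn: "\<And>i. i < L - 2 \<Longrightarrow> w ! i = vs ! Suc i" using False by (simp add: w_def nth_tl L_def)
  have "distinct w"
  proof (subst distinct_conv_nth, intro allI impI notI)
    fix i j assume ij: "i < length w" "j < length w" "i \<noteq> j" "w ! i = w ! j"
    have key: "\<And>i j. i < j \<Longrightarrow> j < L - 2 \<Longrightarrow> vs ! Suc i = vs ! Suc j \<Longrightarrow> False"
    proof -
      fix i j assume a: "i < j" "j < L - 2" "vs ! Suc i = vs ! Suc j"
      define v where "v = vs ! Suc i"
      show False
      proof (cases "j = Suc i")
        case True
        have "W ! Suc i = {v}" using a True Wn[of "Suc i"] by (simp add: v_def)
        moreover have "W ! Suc i \<in> E" using WE WL a by (auto)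
        ultimately show False using noloop by simp
      next
        case F: False
        have vV: "v \<in> V" using VS a False by (auto simp: v_def L_def)
        have S: "{W!i, W!Suc i, W!j, W!Suc j} \<subseteq> {e\<in>E. v \<in> e}"
        proof -
          have b: "i < L - 1" "Suc i < L - 1" "j < L - 1" "Suc j < L - 1" using a by auto
          have "W!i \<in> E" "W!Suc i \<in> E" "W!j \<in> E" "W!Suc j \<in> E"
            using b WE WL by (auto intro!: subsetD[OF WE] nth_mem)
          moreover have "v \<in> W!i" "v \<in> W!Suc i" "v \<in> W!j" "v \<in> W!Suc j"
            using b Wn[of i] Wn[of "Suc i"] Wn[of j] Wn[of "Suc j"] a by (auto simp: v_def)
          ultimately show ?thesis by auto
        qed
        have d: "W!i \<noteq> W!Suc i" "W!i \<noteq> W!j" "W!i \<noteq> W!Suc j" "W!Suc i \<noteq> W!j"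
             "W!Suc i \<noteq> W!Suc j" "W!j \<noteq> W!Suc j"
          using Wd a F WL by (auto simp: nth_eq_iff_index_eq)
        have "card {W!i, W!Suc i, W!j, W!Suc j} = 4" using d by simp
        moreover have "card {W!i, W!Suc i, W!j, W!Suc j} \<le> card {e\<in>E. v \<in> e}"
          using S fin by (intro card_mono) auto
        ultimately show False using deg[OF vV] by simp
      qed
    qed
    show False
    proof (cases "i < j")
      case True thus False using key[of i j] ij wl wn by auto
    next
      case False thus False using key[of j i] ij wl wn by auto
    qed
  qed
  hence "L - 2 = card (set w)" using wl by (simp add: distinct_card)
  also have "\<dots> \<le> card V"
  proof (rule card_mono[OF fin(1)])
    show "set w \<subseteq> V" using VS set_take_subset[of "L-2" "tl vs"] list.set_sel(2)[of vs] unfolding w_def by (cases vs) auto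
  qed
  finally show ?thesis using False by (simp add: trail_length_def L_def)
qed



definition pr :: "nat \<Rightarrow> nat \<Rightarrow> nat" where "pr n k = (if k = 0 then n - 1 else k - 1)"

lemma memE: "e \<in> prism_edges n \<longleftrightarrow>
   (\<exists>i b. i < n \<and> e = {(i, b), (Suc i mod n, b)}) \<or> (\<exists>i. i < n \<and> e = {(i, False), (i, True)})"
  unfolding prism_edges_def by blast

lemma E_cyc: "i < n \<Longrightarrow> {(i, b), (Suc i mod n, b)} \<in> prism_edges n"
  unfolding memE by blast
lemma E_rung: "i < n \<Longrightarrow> {(i, False), (i, True)} \<in> prism_edges n"
  unfolding memE by blast

lemma finE: "finite (prism_edges n)"
proof -
  have "prism_edges n = (\<lambda>(i,b). {(i, b), (Suc i mod n, b)}) ` ({..<n} \<times> UNIV)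
     \<union> (\<lambda>i. {(i, False), (i, True)}) ` {..<n}"
    unfolding prism_edges_def by auto
  thus ?thesis by simp
qed

lemma finV: "finite (prism_verts n)" and cardV: "card (prism_verts n) = 2 * n"
  by (auto simp: prism_verts_def card_cartesian_product)

lemma noloop: "n \<ge> 2 \<Longrightarrow> {v} \<notin> prism_edges n"
proof
  assume n: "n \<ge> 2" and "{v} \<in> prism_edges n"
  then consider i b where "i < n" "{v} = {(i, b), (Suc i mod n, b)}" | i where "{v} = {(i, False), (i, True)}"
    unfolding memE by blast
  thus False
  proof cases
    case 1
    have "(i,b) \<in> {v}" "(Suc i mod n, b) \<in> {v}" by (simp_all add: 1(2))
    hence "Suc i mod n = i" by (metis fst_conv singletonD)
    thus False using 1 n by (cases "Suc i = n") auto
  next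
    case 2
    have "(i,False) \<in> {v}" "(i,True) \<in> {v}" by (simp_all add: 2)
    thus False by (metis snd_conv singletonD)
  qed
qed

lemma incident:
  assumes n: "n \<ge> 3" and k: "k < n"
  shows "{e \<in> prism_edges n. (k, b) \<in> e} =
    {{(k, False), (k, True)}, {(k, b), (Suc k mod n, b)}, {(pr n k, b), (k, b)}}"
proof (intro equalityI subsetI)
  fix e assume "e \<in> {e \<in> prism_edges n. (k, b) \<in> e}"
  hence e: "e \<in> prism_edges n" "(k, b) \<in> e" by auto
  from e(1) consider i c where "i < n" "e = {(i, c), (Suc i mod n, c)}" | i where "i < n" "e = {(i, False), (i, True)}"
    unfolding memE by blast
  thus "e \<in> {{(k, False), (k, True)}, {(k, b), (Suc k mod n, b)}, {(pr n k, b), (k, b)}}"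
  proof cases
    case 1
    with e(2) have "c = b" "k = i \<or> k = Suc i mod n" by auto
    moreover have "k = Suc i mod n \<Longrightarrow> i = pr n k"
      using 1 k n by (cases "Suc i = n") (auto simp: pr_def)
    ultimately show ?thesis using 1 by auto
  next
    case 2 thus ?thesis using e(2) by (cases b) auto
  qed
next
  fix e assume "e \<in> {{(k, False), (k, True)}, {(k, b), (Suc k mod n, b)}, {(pr n k, b), (k, b)}}"
  moreover have "pr n k < n" "Suc (pr n k) mod n = k" using k n by (auto simp: pr_def)
  ultimately show "e \<in> {e \<in> prism_edges n. (k, b) \<in> e}"
    using E_cyc[of k n b] E_cyc[of "pr n k" n b] E_rung[of k n] k by auto
qed

lemma incident_card:
  assumes n: "n \<ge> 3" and k: "k < n"
  shows "card {e \<in> prism_edges n. (k, b) \<in> e} = 3"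
proof -
  have d1: "{(k, False), (k, True)} \<noteq> {(k, b), (Suc k mod n, b)}"
    by (cases b) (auto simp: doubleton_eq_iff)
  have d2: "{(k, False), (k, True)} \<noteq> {(pr n k, b), (k, b)}"
    by (cases b) (auto simp: doubleton_eq_iff)
  have d3: "{(k, b), (Suc k mod n, b)} \<noteq> {(pr n k, b), (k, b)}"
  proof
    assume "{(k, b), (Suc k mod n, b)} = {(pr n k, b), (k, b)}"
    hence "Suc k mod n = pr n k \<or> Suc k mod n = k" by (auto simp: doubleton_eq_iff)
    thus False using n k by (cases "Suc k = n") (auto simp: pr_def split: if_splits)
  qed
  show ?thesis unfolding incident[OF n k] using d1 d2 d3 by simp
qed

lemma cubic_prism: "n \<ge> 3 \<Longrightarrow> cubic (prism_verts n) (prism_edges n)"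
  unfolding cubic_def prism_verts_def using incident_card by auto

lemma bound_prism: "n \<ge> 3 \<Longrightarrow> is_trail (prism_verts n) (prism_edges n) vs \<Longrightarrow> trail_length vs \<le> 2 * n + 1"
  using trail_bound[OF finV[of n] finE[of n] noloop, of vs] incident_card cardV[of n]
  by (auto simp: prism_verts_def)



definition f1 :: "nat \<Rightarrow> nat \<Rightarrow> nat \<times> bool" where
  "f1 n j = (if j = 0 then (0, False) else if j \<le> n then (j - 1, True)
     else if j \<le> 2*n then (2*n - j, False) else (n - 1, False))"

definition f2 :: "nat \<Rightarrow> nat \<Rightarrow> nat \<times> bool" where
  "f2 n j = (if j < n then (j, False) else if j < 2*n then (2*n - 1 - j, True)
     else if j = 2*n then (0, False) else (n - 1, False))"

lemma f1_dist: "n \<ge> 3 \<Longrightarrow> i < j \<Longrightarrow> j < 2*n+1 \<Longrightarrow> {f1 n i, f1 n (Suc i)} \<noteq> {f1 n j, f1 n (Suc j)}"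
  unfolding f1_def by (auto simp: doubleton_eq_iff split: if_splits)

lemma f2_dist: "n \<ge> 3 \<Longrightarrow> i < j \<Longrightarrow> j < 2*n+1 \<Longrightarrow> {f2 n i, f2 n (Suc i)} \<noteq> {f2 n j, f2 n (Suc j)}"
  unfolding f2_def by (auto simp: doubleton_eq_iff split: if_splits)



lemma E_s1: "Suc i < n \<Longrightarrow> {(i, b), (Suc i, b)} \<in> prism_edges n"
  using E_cyc[of i n b] by simp
lemma E_s2: "Suc i < n \<Longrightarrow> {(Suc i, b), (i, b)} \<in> prism_edges n"
  using E_s1[of i n b] by (simp add: insert_commute)
lemma E_w: "0 < n \<Longrightarrow> {(0, b), (n - 1, b)} \<in> prism_edges n"
  using E_cyc[of "n - 1" n b] by (simp add: insert_commute)
lemma E_r2: "i < n \<Longrightarrow> {(i, True), (i, False)} \<in> prism_edges n"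
  using E_rung[of i n] by (simp add: insert_commute)

lemma f1_mem: assumes "n \<ge> 3" "j < 2*n+1" shows "{f1 n j, f1 n (Suc j)} \<in> prism_edges n"
proof -
  consider "j = 0" | "0 < j" "j < n" | "j = n" | "n < j" "j < 2*n" | "j = 2*n" using assms by linarith
  thus ?thesis
  proof cases
    case 1 thus ?thesis using assms E_rung[of 0 n] by (simp add: f1_def)
  next
    case 2 thus ?thesis using assms E_s1[of "j-1" n True] by (simp add: f1_def)
  next
    case 3 thus ?thesis using assms E_r2[of "n-1" n] by (simp add: f1_def)
  next
    case 4 thus ?thesis using assms E_s2[of "2*n-j-1" n False]
      by (simp add: f1_def Suc_diff_Suc)
  next
    case 5 thus ?thesis using assms E_w[of n False] by (simp add: f1_def)
  qed
qed

lemma f2_mem: assumes "n \<ge> 3" "j < 2*n+1" shows "{f2 n j, f2 n (Suc j)} \<in> prism_edges n"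
proof -
  consider "Suc j < n" | "Suc j = n" | "n \<le> j" "Suc j < 2*n" | "Suc j = 2*n" | "j = 2*n" using assms by linarith
  thus ?thesis
  proof cases
    case 1 thus ?thesis using assms E_s1[of j n False] by (simp add: f2_def)
  next
    case 2 hence "n - Suc 0 = j" by simp
    thus ?thesis using 2 assms E_rung[of j n] by (simp add: f2_def)
  next
    case 3 thus ?thesis using assms E_s2[of "2*n-2-j" n True]
      by (simp add: f2_def Suc_diff_Suc numeral_2_eq_2)
  next
    case 4 thus ?thesis using assms E_r2[of 0 n] by (simp add: f2_def)
  next
    case 5 thus ?thesis using assms E_w[of n False] by (simp add: f2_def)
  qed
qed

lemma f1_span: assumes "n \<ge> 3" shows "f1 n ` {0..2*n+1} = prism_verts n"
proof
  show "f1 n ` {0..2*n+1} \<subseteq> prism_verts n" using assms by (auto simp: f1_def prism_verts_def)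
  show "prism_verts n \<subseteq> f1 n ` {0..2*n+1}"
  proof
    fix v assume "v \<in> prism_verts n"
    then obtain i b where v: "v = (i, b)" "i < n" by (auto simp: prism_verts_def)
    show "v \<in> f1 n ` {0..2*n+1}"
    proof (cases b)
      case True
      hence "v = f1 n (Suc i)" using v by (simp add: f1_def)
      thus ?thesis using v by auto
    next
      case False
      hence "v = f1 n (2*n - i)" using v by (simp add: f1_def)
      thus ?thesis using v by auto
    qed
  qed
qed

lemma f2_span: assumes "n \<ge> 3" shows "f2 n ` {0..2*n+1} = prism_verts n"
proof
  show "f2 n ` {0..2*n+1} \<subseteq> prism_verts n" using assms by (auto simp: f2_def prism_verts_def)
  show "prism_verts n \<subseteq> f2 n ` {0..2*n+1}"
  proof
    fix v assume "v \<in> prism_verts n"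
    then obtain i b where v: "v = (i, b)" "i < n" by (auto simp: prism_verts_def)
    show "v \<in> f2 n ` {0..2*n+1}"
    proof (cases b)
      case False
      hence "v = f2 n i" using v by (simp add: f2_def)
      thus ?thesis using v by auto
    next
      case True
      hence "v = f2 n (2*n - 1 - i)" using v by (simp add: f2_def)
      thus ?thesis using v by auto
    qed
  qed
qed

lemma trail_of_fun:
  assumes mem: "\<And>j. j < m \<Longrightarrow> {f j, f (Suc j)} \<in> E"
    and dist: "\<And>i j. i < j \<Longrightarrow> j < m \<Longrightarrow> {f i, f (Suc i)} \<noteq> {f j, f (Suc j)}"
    and V: "f ` {0..m} \<subseteq> V"
  shows "is_trail V E (map f [0..<Suc m])"
    and "walk_edges (map f [0..<Suc m]) = map (\<lambda>j. {f j, f (Suc j)}) [0..<m]"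
proof -
  show we: "walk_edges (map f [0..<Suc m]) = map (\<lambda>j. {f j, f (Suc j)}) [0..<m]"
    by (rule nth_equalityI) (auto simp: we_len we_nth nth_append simp del: upt_Suc)
  show "is_trail V E (map f [0..<Suc m])"
    unfolding is_trail_def we
  proof (intro conjI)
    show "distinct (map (\<lambda>j. {f j, f (Suc j)}) [0..<m])"
      unfolding distinct_conv_nth using dist by (auto simp: nat_neq_iff)
    show "set (map f [0..<Suc m]) \<subseteq> V" using V by auto
  qed (use mem in \<open>auto simp del: upt_Suc\<close>)
qed



definition good :: "'v set \<Rightarrow> 'v set set \<Rightarrow> nat \<Rightarrow> 'v \<Rightarrow> 'v set \<Rightarrow> 'v list \<Rightarrow> bool" where
  "good V E t v e vs \<longleftrightarrow> is_trail V E vs \<and> trail_length vs = t \<and> length vs \<ge> 2 \<and> hd vs = v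
     \<and> hd (walk_edges vs) = e \<and> set vs = V"

lemma we_map: "walk_edges (map \<phi> vs) = map ((`) \<phi>) (walk_edges vs)"
  by (rule nth_equalityI) (auto simp: we_len we_nth)

lemma good_map:
  assumes fin: "finite V" and inj: "inj_on \<phi> V" and img: "\<phi> ` V \<subseteq> V"
    and ed: "\<forall>e\<in>E. \<phi> ` e \<in> E" and g: "good V E t v e vs"
  shows "good V E t (\<phi> v) (\<phi> ` e) (map \<phi> vs)"
proof -
  have tr: "is_trail V E vs" and L: "length vs \<ge> 2" and sv: "set vs = V"
    and h: "hd vs = v" and he: "hd (walk_edges vs) = e" and tl: "trail_length vs = t"
    using g by (auto simp: good_def)
  have sub: "\<And>x. x \<in> set (walk_edges vs) \<Longrightarrow> x \<subseteq> V"
  proof -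
    fix x assume "x \<in> set (walk_edges vs)"
    then obtain j where j: "j < length vs - 1" "x = walk_edges vs ! j"
      by (auto simp: in_set_conv_nth we_len)
    hence "x = {vs!j, vs!Suc j}" by (simp add: we_nth)
    thus "x \<subseteq> V" using j sv by auto
  qed
  have injE: "inj_on ((`) \<phi>) (set (walk_edges vs))"
    unfolding inj_on_def using inj_on_image_eq_iff[OF inj] sub by blast
  have "is_trail V E (map \<phi> vs)"
    using tr img sv injE ed unfolding is_trail_def we_map by (auto simp: distinct_map)
  moreover have "hd (walk_edges (map \<phi> vs)) = \<phi> ` e"
  proof -
    have "walk_edges vs \<noteq> []" using L we_len[of vs] by auto
    thus ?thesis unfolding we_map using he by (simp add: hd_map)
  qed
  moreover have "set (map \<phi> vs) = V" using endo_inj_surj[OF fin img inj] sv by simp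
  moreover have "hd (map \<phi> vs) = \<phi> v" using L h by (cases vs) auto
  ultimately show ?thesis using L tl by (simp add: good_def trail_length_def)
qed

lemma mod_cancel: "(i::nat) < n \<Longrightarrow> j < n \<Longrightarrow> (i+k) mod n = (j+k) mod n \<Longrightarrow> i = j"
proof -
  assume a: "i < n" "j < n" "(i+k) mod n = (j+k) mod n"
  define m where "m = k mod n"
  have m: "m < n" using a by (simp add: m_def)
  have e: "(i+m) mod n = (j+m) mod n" using a(3) by (simp add: m_def mod_add_right_eq)
  have r: "\<And>x. x < n \<Longrightarrow> (x+m) mod n = (if x + m < n then x + m else x + m - n)"
    using m by (auto simp: mod_if le_mod_geq)
  show "i = j" using e r[OF a(1)] r[OF a(2)] a m by (auto split: if_splits)
qed

definition sg :: "nat \<Rightarrow> nat \<Rightarrow> bool \<Rightarrow> nat \<times> bool \<Rightarrow> nat \<times> bool" where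
  "sg n k b = (\<lambda>(i, c). ((i + k) mod n, c \<noteq> b))"
definition rf :: "nat \<Rightarrow> nat \<times> bool \<Rightarrow> nat \<times> bool" where
  "rf n = (\<lambda>(i, c). ((n - i) mod n, c))"

lemma sg_inj: "inj_on (sg n k b) (prism_verts n)"
proof (rule inj_onI)
  fix x y assume "x \<in> prism_verts n" "y \<in> prism_verts n" "sg n k b x = sg n k b y"
  then obtain i c j d where xy: "x = (i, c)" "y = (j, d)" "i < n" "j < n"
     "(i + k) mod n = (j + k) mod n" "(c \<noteq> b) = (d \<noteq> b)"
    by (cases x, cases y) (auto simp: prism_verts_def sg_def)
  have "i = j" using xy mod_cancel by blast
  thus "x = y" using xy by auto
qed

lemma sg_img: "0 < n \<Longrightarrow> sg n k b ` prism_verts n \<subseteq> prism_verts n"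
  by (auto simp: sg_def prism_verts_def)

lemma sg_edge: assumes "e \<in> prism_edges n" shows "sg n k b ` e \<in> prism_edges n"
proof -
  from assms consider i c where "i < n" "e = {(i, c), (Suc i mod n, c)}" | i where "i < n" "e = {(i, False), (i, True)}"
    unfolding memE by blast
  thus ?thesis
  proof cases
    case 1
    have "Suc ((i + k) mod n) mod n = (Suc i mod n + k) mod n" by (simp add: mod_simps)
    hence "sg n k b ` e = {((i + k) mod n, c \<noteq> b), (Suc ((i + k) mod n) mod n, c \<noteq> b)}"
      using 1 by (simp add: sg_def)
    thus ?thesis using E_cyc[of "(i+k) mod n" n] 1 by simp
  next
    case 2
    hence "sg n k b ` e = {((i + k) mod n, False), ((i + k) mod n, True)}"
      by (cases b) (auto simp: sg_def)
    thus ?thesis using E_rung[of "(i+k) mod n" n] 2 by simp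
  qed
qed

lemma rf_inj: "inj_on (rf n) (prism_verts n)"
proof (rule inj_onI)
  fix x y assume "x \<in> prism_verts n" "y \<in> prism_verts n" "rf n x = rf n y"
  then obtain i c j d where xy: "x = (i, c)" "y = (j, d)" "i < n" "j < n"
     "(n - i) mod n = (n - j) mod n" "c = d"
    by (cases x, cases y) (auto simp: prism_verts_def rf_def)
  have "i = j"
  proof (cases "i = 0 \<or> j = 0")
    case True thus ?thesis using xy by (auto simp: mod_if split: if_splits)
  next
    case False thus ?thesis using xy by (auto simp: mod_if split: if_splits)
  qed
  thus "x = y" using xy by auto
qed

lemma rf_img: "0 < n \<Longrightarrow> rf n ` prism_verts n \<subseteq> prism_verts n"
  by (auto simp: rf_def prism_verts_def)

lemma rf_edge: assumes "e \<in> prism_edges n" shows "rf n ` e \<in> prism_edges n"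
proof -
  from assms consider i c where "i < n" "e = {(i, c), (Suc i mod n, c)}" | i where "i < n" "e = {(i, False), (i, True)}"
    unfolding memE by blast
  thus ?thesis
  proof cases
    case 1
    define i' where "i' = (n - Suc i mod n) mod n"
    have a: "Suc i' mod n = (n - i) mod n"
      using 1(1) by (cases "Suc i = n") (auto simp: i'_def Suc_diff_Suc)
    have "rf n ` e = {(i', c), (Suc i' mod n, c)}"
      using 1 a by (auto simp: rf_def i'_def)
    moreover have "i' < n" using 1 by (simp add: i'_def)
    ultimately show ?thesis using E_cyc by simp
  next
    case 2
    hence "rf n ` e = {((n - i) mod n, False), ((n - i) mod n, True)}"
      by (auto simp: rf_def)
    thus ?thesis using E_rung[of "(n - i) mod n" n] 2 by simp
  qed
qed



lemma good_f:
  assumes n: "n \<ge> 3"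
    and mem: "\<And>j. j < 2*n+1 \<Longrightarrow> {f j, f (Suc j)} \<in> prism_edges n"
    and dist: "\<And>i j. i < j \<Longrightarrow> j < 2*n+1 \<Longrightarrow> {f i, f (Suc i)} \<noteq> {f j, f (Suc j)}"
    and span: "f ` {0..2*n+1} = prism_verts n"
  shows "good (prism_verts n) (prism_edges n) (2*n+1) (f 0) {f 0, f 1} (map f [0..<Suc (2*n+1)])"
proof -
  have V: "f ` {0..2*n+1} \<subseteq> prism_verts n" using span by simp
  note tf = trail_of_fun[of "2*n+1" f "prism_edges n", OF mem dist V]
  have "hd (walk_edges (map f [0..<Suc (2*n+1)])) = {f 0, f 1}"
  proof -
    let ?vs = "map f [0..<Suc (2*n+1)]"
    have l: "length ?vs = Suc (2*n+1)" by (simp del: upt_Suc)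
    have "walk_edges ?vs \<noteq> []" using we_len[of ?vs] l by auto
    hence "hd (walk_edges ?vs) = walk_edges ?vs ! 0" by (simp add: hd_conv_nth)
    also have "\<dots> = {?vs ! 0, ?vs ! 1}" using we_nth[of 0 ?vs] l by simp
    also have "\<dots> = {f 0, f 1}" by (simp del: upt_Suc)
    finally show ?thesis .
  qed
  moreover have "hd (map f [0..<Suc (2*n+1)]) = f 0" by (simp add: upt_conv_Cons del: upt_Suc)
  moreover have "set (map f [0..<Suc (2*n+1)]) = prism_verts n"
  proof -
    have "set (map f [0..<Suc (2*n+1)]) = f ` {0..<Suc (2*n+1)}" by (simp only: set_map set_upt)
    also have "{0..<Suc (2*n+1)} = {0..2*n+1}" by (rule atLeastLessThanSuc_atLeastAtMost)
    finally show ?thesis using span by simp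
  qed
  ultimately show ?thesis using tf(1) by (simp add: good_def trail_length_def)
qed

lemma good1: "n \<ge> 3 \<Longrightarrow> good (prism_verts n) (prism_edges n) (2*n+1) (0, False) {(0, False), (0, True)} (map (f1 n) [0..<Suc (2*n+1)])"
proof -
  assume n: "n \<ge> 3"
  have "f1 n 0 = (0, False)" "f1 n 1 = (0, True)" using n by (simp_all add: f1_def)
  thus ?thesis using good_f[of n "f1 n", OF n f1_mem[OF n] f1_dist[OF n] f1_span[OF n]] by (simp only:)
qed

lemma good2: "n \<ge> 3 \<Longrightarrow> good (prism_verts n) (prism_edges n) (2*n+1) (0, False) {(0, False), (1, False)} (map (f2 n) [0..<Suc (2*n+1)])"
proof -
  assume n: "n \<ge> 3"
  have "f2 n 0 = (0, False)" "f2 n 1 = (1, False)" using n by (simp_all add: f2_def)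
  thus ?thesis using good_f[of n "f2 n", OF n f2_mem[OF n] f2_dist[OF n] f2_span[OF n]] by (simp only:)
qed

theorem lemma2p7:
  fixes n :: nat
  assumes "n \<ge> 3"
  shows "cubic (prism_verts n) (prism_edges n) \<and> admissible (prism_verts n) (prism_edges n)"
proof
  show "cubic (prism_verts n) (prism_edges n)" using cubic_prism assms .
  let ?V = "prism_verts n" and ?E = "prism_edges n"
  have n: "n \<ge> 3" by fact
  have lt: "longest_trail ?V ?E = 2*n+1"
    unfolding longest_trail_def
  proof (rule Max_eqI)
    show "finite {trail_length vs |vs. is_trail ?V ?E vs}"
      by (rule finite_subset[of _ "{..2*n+1}"]) (auto dest: bound_prism[OF n])
    show "\<And>y. y \<in> {trail_length vs |vs. is_trail ?V ?E vs} \<Longrightarrow> y \<le> 2*n+1"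
      by (auto dest: bound_prism[OF n])
    show "2*n+1 \<in> {trail_length vs |vs. is_trail ?V ?E vs}"
    proof -
      have "is_trail ?V ?E (map (f1 n) [0..<Suc (2*n+1)]) \<and> trail_length (map (f1 n) [0..<Suc (2*n+1)]) = 2*n+1"
        using good1[OF n] unfolding good_def by (elim conjE) (intro conjI)
      thus ?thesis by (intro CollectI exI[of _ "map (f1 n) [0..<Suc (2*n+1)]"]) auto
    qed
  qed
  have cE: "2*n+1 < card ?E"
  proof -
    let ?T = "map (f1 n) [0..<Suc (2*n+1)]"
    have g: "good ?V ?E (2*n+1) (0, False) {(0, False), (0, True)} ?T" using good1[OF n] .
    hence tr: "is_trail ?V ?E ?T" by (simp add: good_def)
    have we: "walk_edges ?T = map (\<lambda>j. {f1 n j, f1 n (Suc j)}) [0..<2*n+1]"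
      by (rule trail_of_fun(2)[where V="prism_verts n" and E="prism_edges n", OF f1_mem[OF n] f1_dist[OF n] equalityD1[OF f1_span[OF n]]])
    define x where "x = {(0::nat, True), (n - 1, True)}"
    have xE: "x \<in> ?E" using E_w[of n True] n by (simp add: x_def)
    have xn: "x \<notin> set (walk_edges ?T)"
    proof
      assume "x \<in> set (walk_edges ?T)"
      then obtain j where j: "j < 2*n+1" "x = {f1 n j, f1 n (Suc j)}" unfolding we by (auto simp del: upt_Suc)
      have T: "\<And>i. snd (f1 n i) = True \<Longrightarrow> 0 < i \<and> i \<le> n \<and> f1 n i = (i - 1, True)"
        by (auto simp: f1_def split: if_splits)
      have "f1 n j \<in> x" "f1 n (Suc j) \<in> x" using j by auto
      hence "snd (f1 n j) = True" "snd (f1 n (Suc j)) = True" unfolding x_def by auto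
      from T[OF this(1)] T[OF this(2)] have a: "0 < j" "Suc j \<le> n" "f1 n j = (j - 1, True)" "f1 n (Suc j) = (j, True)" by auto
      have "(j, True) \<in> x" using j(2) a by simp
      hence "j = 0 \<or> j = n - 1" unfolding x_def by auto
      moreover have "(j - 1, True) \<in> x" using j(2) a by simp
      hence "j - 1 = 0 \<or> j - 1 = n - 1" unfolding x_def by auto
      ultimately show False using a n by auto
    qed
    have "card (insert x (set (walk_edges ?T))) \<le> card ?E"
      using tr xE finE[of n] by (intro card_mono) (auto simp: is_trail_def)
    moreover have "card (set (walk_edges ?T)) = 2*n+1"
      using tr by (simp add: is_trail_def distinct_card we_len)
    ultimately show ?thesis using xn by simp
  qed
  have G: "\<exists>vs. good ?V ?E (2*n+1) v e vs" if v: "v \<in> ?V" and e: "e \<in> ?E" "v \<in> e" for v e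
  proof -
    obtain k b where kb: "v = (k, b)" "k < n" using v by (auto simp: prism_verts_def)
    have n0: "0 < n" using n by simp
    have ee: "e \<in> {{(k, False), (k, True)}, {(k, b), (Suc k mod n, b)}, {(pr n k, b), (k, b)}}"
      using incident[OF n kb(2), of b] e kb by blast
    have sge: "\<forall>e\<in>prism_edges n. sg n k b ` e \<in> prism_edges n" using sg_edge by blast
    have rfe: "\<forall>e\<in>prism_edges n. rf n ` e \<in> prism_edges n" using rf_edge by blast
    have gm: "\<And>t v e vs. good ?V ?E t v e vs \<Longrightarrow> good ?V ?E t (sg n k b v) (sg n k b ` e) (map (sg n k b) vs)"
      by (rule good_map[OF finV sg_inj sg_img[OF n0] sge])
    have s0: "sg n k b (0, False) = (k, b)" using kb by (simp add: sg_def)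
    consider "e = {(k, False), (k, True)}" | "e = {(k, b), (Suc k mod n, b)}" | "e = {(pr n k, b), (k, b)}"
      using ee by blast
    thus ?thesis
    proof cases
      case 1
      have q: "sg n k b ` {(0, False), (0, True)} = e" using 1 kb by (cases b) (auto simp: sg_def)
      have "good ?V ?E (2*n+1) v e (map (sg n k b) (map (f1 n) [0..<Suc (2*n+1)]))"
        using gm[OF good1[OF n]] by (simp only: s0 q kb(1))
      thus ?thesis by (rule exI)
    next
      case 2
      have q: "sg n k b ` {(0, False), (1, False)} = e" using 2 kb by (auto simp: sg_def mod_simps)
      have "good ?V ?E (2*n+1) v e (map (sg n k b) (map (f2 n) [0..<Suc (2*n+1)]))"
        using gm[OF good2[OF n]] by (simp only: s0 q kb(1))
      thus ?thesis by (rule exI)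
    next
      case 3
      have g3: "good ?V ?E (2*n+1) (0, False) {(0, False), (n - 1, False)} (map (rf n) (map (f2 n) [0..<Suc (2*n+1)]))"
      proof -
        have "good ?V ?E (2*n+1) (rf n (0, False)) (rf n ` {(0, False), (1, False)}) (map (rf n) (map (f2 n) [0..<Suc (2*n+1)]))"
          by (rule good_map[OF finV rf_inj rf_img[OF n0] rfe good2[OF n]])
        moreover have "rf n (0, False) = (0, False)" "rf n ` {(0, False), (1, False)} = {(0, False), (n - 1, False)}"
          using n by (auto simp: rf_def)
        ultimately show ?thesis by (simp only:)
      qed
      have "(n - 1 + k) mod n = pr n k" using kb n
        by (cases "k = 0") (auto simp: pr_def le_mod_geq)
      hence q: "sg n k b ` {(0, False), (n - 1, False)} = e" using 3 kb by (auto simp: sg_def)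
      have "good ?V ?E (2*n+1) v e (map (sg n k b) (map (rf n) (map (f2 n) [0..<Suc (2*n+1)])))"
        using gm[OF g3] by (simp only: s0 q kb(1))
      thus ?thesis by (rule exI)
    qed
  qed
  show "admissible ?V ?E"
    unfolding admissible_def lt
  proof (intro conjI ballI impI)
    show "2*n+1 < card ?E" by (rule cE)
    fix v e assume "v \<in> ?V" "e \<in> ?E" "v \<in> e"
    then obtain vs where "good ?V ?E (2*n+1) v e vs" using G by blast
    thus "\<exists>vs. is_trail ?V ?E vs \<and> trail_length vs = 2*n+1 \<and> 2 \<le> length vs \<and> hd vs = v \<and>
            hd (walk_edges vs) = e \<and> set vs = ?V" unfolding good_def by blast
  qed
qed


end
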